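(* Let $X$ be a countable infinite set, $\mathcal{I}$ a $p^+$ and hereditarily meager ideal on $X$, and $\tau$ an $\mathcal{I}$-crowded topology on $X$ with $\pi w(\tau)<\mathfrak{m}_c$. Suppose $\langle D_i:i\in\omega\rangle$ is a decreasing sequence of $(\mathcal{I},\tau)$-crowded $\tau$-dense subsets of $X$. Then there are finite sets $K_i\subseteq D_i$ ($i\in\omega$) such that $\bigcup_{i\in\omega}K_i$ is $\tau$-dense and $(\mathcal{I},\tau)$-crowded.
   Context: An ideal on $X$ is a family of subsets of $X$ closed under subsets and finite unions; all ideals are assumed proper ($X\notin\mathcal{I}$) and free (every finite subset of $X$ is in $\mathcal{I}$). $\mathcal{I}^+=\mathcal{P}(X)\setminus\mathcal{I}$. Subsets of $X$ are identified with points of $2^X$. $\mathcal{I}$ is hereditarily meager if for every $A\in\mathcal{I}^+$, $\mathcal{I}\cap\mathcal{P}(A)$ is meager in $2^A$. $\mathcal{I}$ is $p^+$ if for every decreasing sequence $(A_n)_n$ of sets in $\mathcal{I}^+$ there is $A\in\mathcal{I}^+$ with $A\setminus A_n$ finite for all $n$. A topology $\tau$ on $X$ is $\mathcal{I}$-crowded if $\tau\cap\mathcal{I}=\{\emptyset\}$. A set $A\subseteq X$ is $(\mathcal{I},\tau)$-crowded if for every $U\in\tau$, $A\cap U$ is either empty or in $\mathcal{I}^+$. $\mathfrak{m}_c$ is the least cardinal $\kappa$ such that MA$(\kappa)$ for countable posets fails. $\pi w$ denotes $\pi$-weight. *)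

theory Defs
  imports "HOL-Analysis.Analysis" "HOL-Library.Equipollence"
begin

definition ideal_on :: "'a set \<Rightarrow> 'a set set \<Rightarrow> bool" where
  "ideal_on X I \<longleftrightarrow> I \<subseteq> Pow X
     \<and> (\<forall>A B. A \<in> I \<and> B \<subseteq> A \<longrightarrow> B \<in> I)
     \<and> (\<forall>A B. A \<in> I \<and> B \<in> I \<longrightarrow> A \<union> B \<in> I)
     \<and> X \<notin> I
     \<and> (\<forall>F. finite F \<and> F \<subseteq> X \<longrightarrow> F \<in> I)"

definition positive_sets :: "'a set \<Rightarrow> 'a set set \<Rightarrow> 'a set set" where
  "positive_sets X I = Pow X - I"

definition p_plus :: "'a set \<Rightarrow> 'a set set \<Rightarrow> bool" where
  "p_plus X I \<longleftrightarrow> (\<forall>A :: nat \<Rightarrow> 'a set.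
      (\<forall>n. A n \<in> positive_sets X I) \<and> (\<forall>n. A (Suc n) \<subseteq> A n) \<longrightarrow>
      (\<exists>B \<in> positive_sets X I. \<forall>n. finite (B - A n)))"

definition nowhere_dense_in :: "'b topology \<Rightarrow> 'b set \<Rightarrow> bool" where
  "nowhere_dense_in T S \<longleftrightarrow> T interior_of (T closure_of S) = {}"

definition meager_in :: "'b topology \<Rightarrow> 'b set \<Rightarrow> bool" where
  "meager_in T S \<longleftrightarrow> (\<exists>F :: nat \<Rightarrow> 'b set.
      (\<forall>n. nowhere_dense_in T (F n)) \<and> S \<subseteq> (\<Union>n. F n))"

text \<open>The Cantor space 2^A: product of discrete two-point spaces over A;
  a subset B of A is identified with its characteristic function on A.\<close>
definition cantor_space :: "'a set \<Rightarrow> ('a \<Rightarrow> bool) topology" where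
  "cantor_space A = product_topology (\<lambda>_. discrete_topology (UNIV :: bool set)) A"

definition char_point :: "'a set \<Rightarrow> 'a set \<Rightarrow> ('a \<Rightarrow> bool)" where
  "char_point A B = (\<lambda>x\<in>A. x \<in> B)"

definition hereditarily_meager :: "'a set \<Rightarrow> 'a set set \<Rightarrow> bool" where
  "hereditarily_meager X I \<longleftrightarrow> (\<forall>A \<in> positive_sets X I.
      meager_in (cantor_space A) (char_point A ` (I \<inter> Pow A)))"

definition I_crowded_topology :: "'a set set \<Rightarrow> 'a topology \<Rightarrow> bool" where
  "I_crowded_topology I \<tau> \<longleftrightarrow> {U. openin \<tau> U} \<inter> I = {{}}"

definition I_tau_crowded :: "'a set \<Rightarrow> 'a set set \<Rightarrow> 'a topology \<Rightarrow> 'a set \<Rightarrow> bool" where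
  "I_tau_crowded X I \<tau> A \<longleftrightarrow>
     (\<forall>U. openin \<tau> U \<longrightarrow> A \<inter> U = {} \<or> A \<inter> U \<in> positive_sets X I)"

definition dense_in :: "'a topology \<Rightarrow> 'a set \<Rightarrow> bool" where
  "dense_in \<tau> D \<longleftrightarrow> D \<subseteq> topspace \<tau> \<and> \<tau> closure_of D = topspace \<tau>"

definition pi_base :: "'a topology \<Rightarrow> 'a set set \<Rightarrow> bool" where
  "pi_base \<tau> \<B> \<longleftrightarrow> (\<forall>B\<in>\<B>. openin \<tau> B \<and> B \<noteq> {})
     \<and> (\<forall>U. openin \<tau> U \<and> U \<noteq> {} \<longrightarrow> (\<exists>B\<in>\<B>. B \<subseteq> U))"

text \<open>Countable posets are represented (up to isomorphism) on subsets of nat.\<close>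
definition countable_poset :: "nat set \<Rightarrow> (nat \<Rightarrow> nat \<Rightarrow> bool) \<Rightarrow> bool" where
  "countable_poset P le \<longleftrightarrow> P \<noteq> {}
     \<and> (\<forall>p\<in>P. le p p)
     \<and> (\<forall>p\<in>P. \<forall>q\<in>P. \<forall>r\<in>P. le p q \<and> le q r \<longrightarrow> le p r)
     \<and> (\<forall>p\<in>P. \<forall>q\<in>P. le p q \<and> le q p \<longrightarrow> p = q)"

definition dense_poset :: "nat set \<Rightarrow> (nat \<Rightarrow> nat \<Rightarrow> bool) \<Rightarrow> nat set \<Rightarrow> bool" where
  "dense_poset P le D \<longleftrightarrow> D \<subseteq> P \<and> (\<forall>p\<in>P. \<exists>q\<in>D. le q p)"

definition filter_poset :: "nat set \<Rightarrow> (nat \<Rightarrow> nat \<Rightarrow> bool) \<Rightarrow> nat set \<Rightarrow> bool" where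
  "filter_poset P le G \<longleftrightarrow> G \<subseteq> P \<and> G \<noteq> {}
     \<and> (\<forall>p\<in>G. \<forall>q\<in>P. le p q \<longrightarrow> q \<in> G)
     \<and> (\<forall>p\<in>G. \<forall>q\<in>G. \<exists>r\<in>G. le r p \<and> le r q)"

definition MA_countable :: "'b set \<Rightarrow> bool" where
  "MA_countable S \<longleftrightarrow> (\<forall>P le (\<D> :: 'b \<Rightarrow> nat set).
      countable_poset P le \<and> (\<forall>i\<in>S. dense_poset P le (\<D> i)) \<longrightarrow>
      (\<exists>G. filter_poset P le G \<and> (\<forall>i\<in>S. G \<inter> \<D> i \<noteq> {})))"

text \<open>pi w(tau) < m_c, where m_c is the least cardinal for which MA fails for
  countable posets. Since MA fails at 2^aleph_0, and the set of failing cardinals is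
  upward closed, it suffices to range over failing index sets of type nat set set
  (cardinalities up to 2^continuum). pi w(tau) < m_c iff some pi-base has cardinality
  strictly below every cardinal at which MA fails.\<close>
definition piw_less_mc :: "'a topology \<Rightarrow> bool" where
  "piw_less_mc \<tau> \<longleftrightarrow> (\<exists>\<B>. pi_base \<tau> \<B> \<and>
      (\<forall>S :: nat set set. \<not> MA_countable S \<longrightarrow> \<B> \<prec> S))"

end

theory Submission
  imports Defs
begin


lemma MA_nat: "MA_countable (UNIV::nat set)"
  unfolding MA_countable_def
proof (intro allI impI)
  fix P le and \<D> :: "nat \<Rightarrow> nat set"
  assume a: "countable_poset P le \<and> (\<forall>i\<in>UNIV. dense_poset P le (\<D> i))"
  then obtain p0 where p0: "p0 \<in> P" unfolding countable_poset_def by blast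
  have ex: "\<And>k q. q \<in> P \<Longrightarrow> \<exists>r. r \<in> \<D> k \<and> le r q"
    using a unfolding dense_poset_def by blast
  define p where "p = rec_nat p0 (\<lambda>k q. SOME r. r \<in> \<D> k \<and> le r q)"
  have p0': "p 0 = p0" by (simp add: p_def)
  have pS: "p (Suc k) = (SOME r. r \<in> \<D> k \<and> le r (p k))" for k by (simp add: p_def)
  have PP: "p k \<in> P \<and> (\<forall>j. k = Suc j \<longrightarrow> p k \<in> \<D> j \<and> le (p k) (p j))" for k
  proof (induction k)
    case 0 then show ?case using p0 p0' by simp
  next
    case (Suc k)
    have "p (Suc k) \<in> \<D> k \<and> le (p (Suc k)) (p k)"
      unfolding pS by (rule someI_ex) (use ex Suc in blast)
    moreover have "\<D> k \<subseteq> P" using a unfolding dense_poset_def by blast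
    ultimately show ?case by auto
  qed
  have refl: "\<forall>q\<in>P. le q q" and trans: "\<forall>p\<in>P. \<forall>q\<in>P. \<forall>r\<in>P. le p q \<and> le q r \<longrightarrow> le p r"
    using a unfolding countable_poset_def by blast+
  have chain: "le (p (k + d)) (p k)" for k d
  proof (induction d)
    case 0 then show ?case using refl PP by simp
  next
    case (Suc d)
    have "le (p (Suc (k+d))) (p (k+d))" using PP[of "Suc (k+d)"] by simp
    then show ?case using trans PP Suc by (metis add_Suc_right)
  qed
  define G where "G = {q\<in>P. \<exists>k. le (p k) q}"
  have "filter_poset P le G"
    unfolding filter_poset_def
  proof (intro conjI ballI impI)
    show "G \<subseteq> P" by (auto simp: G_def)
    show "G \<noteq> {}" using PP[of 0] refl unfolding G_def by blast
  next
    fix x q assume "x \<in> G" "q \<in> P" "le x q"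
    then show "q \<in> G" unfolding G_def using trans PP by blast
  next
    fix x q assume x: "x \<in> G" and q: "q \<in> G"
    then obtain k1 k2 where k: "le (p k1) x" "le (p k2) q" and xq: "x \<in> P" "q \<in> P" unfolding G_def by blast
    let ?m = "max k1 k2"
    have "le (p ?m) (p k1)" "le (p ?m) (p k2)" using chain
      by (metis le_add_diff_inverse max.cobounded1 max.cobounded2)+
    then have "le (p ?m) x" "le (p ?m) q" using trans PP k xq by blast+
    moreover have "p ?m \<in> G" unfolding G_def using PP refl by blast
    ultimately show "\<exists>r\<in>G. le r x \<and> le r q" by blast
  qed
  moreover have "\<forall>i\<in>UNIV. G \<inter> \<D> i \<noteq> {}"
  proof
    fix i
    have "p (Suc i) \<in> G" unfolding G_def using PP refl by blast
    then show "G \<inter> \<D> i \<noteq> {}" using PP[of "Suc i"] by blast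
  qed
  ultimately show "\<exists>G. filter_poset P le G \<and> (\<forall>i\<in>UNIV. G \<inter> \<D> i \<noteq> {})"
    by (intro exI[of _ G] conjI)
qed


lemma MA_lepoll:
  fixes J :: "'c set" and S :: "'b set"
  assumes "J \<lesssim> S" "MA_countable S"
  shows "MA_countable J"
  unfolding MA_countable_def
proof (intro allI impI)
  fix P le and \<D> :: "'c \<Rightarrow> nat set"
  assume a: "countable_poset P le \<and> (\<forall>i\<in>J. dense_poset P le (\<D> i))"
  obtain h where h: "inj_on h J" "h ` J \<subseteq> S" using assms(1) unfolding lepoll_def by blast
  define \<D>' where "\<D>' s = (if s \<in> h ` J then \<D> (inv_into J h s) else P)" for s
  have "\<forall>s\<in>S. dense_poset P le (\<D>' s)"
  proof
    fix s assume "s \<in> S"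
    show "dense_poset P le (\<D>' s)"
    proof (cases "s \<in> h ` J")
      case True
      then have "inv_into J h s \<in> J" by (rule inv_into_into)
      then have "dense_poset P le (\<D> (inv_into J h s))" using a by blast
      then show ?thesis using True by (simp add: \<D>'_def)
    next
      case False
      have "dense_poset P le P" using a unfolding dense_poset_def countable_poset_def by blast
      then show ?thesis using False by (simp add: \<D>'_def)
    qed
  qed
  moreover have "countable_poset P le" using a by blast
  ultimately have "\<exists>G. filter_poset P le G \<and> (\<forall>s\<in>S. G \<inter> \<D>' s \<noteq> {})"
    using assms(2)[unfolded MA_countable_def, rule_format, of P le \<D>'] by blast
  then obtain G where G: "filter_poset P le G" "\<forall>s\<in>S. G \<inter> \<D>' s \<noteq> {}"
    by blast
  have "\<forall>i\<in>J. G \<inter> \<D> i \<noteq> {}"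
  proof
    fix i assume i: "i \<in> J"
    then have "\<D>' (h i) = \<D> i" using h by (simp add: \<D>'_def)
    moreover have "h i \<in> S" using h i by blast
    ultimately show "G \<inter> \<D> i \<noteq> {}" using G(2) by metis
  qed
  then show "\<exists>G. filter_poset P le G \<and> (\<forall>i\<in>J. G \<inter> \<D> i \<noteq> {})" using G by blast
qed

lemma MA_countable_set:
  assumes "countable J" shows "MA_countable J"
proof -
  have "J \<lesssim> (UNIV::nat set)"
    using assms unfolding lepoll_def countable_def by blast
  then show ?thesis using MA_lepoll MA_nat by blast
qed



lemma MA_poset:
  fixes Q :: "'q set" and lq :: "'q \<Rightarrow> 'q \<Rightarrow> bool" and E :: "'j \<Rightarrow> 'q set"
  assumes cQ: "countable Q" and q0: "q0 \<in> Q"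
    and rf: "\<forall>p\<in>Q. lq p p"
    and tr: "\<forall>p\<in>Q. \<forall>q\<in>Q. \<forall>r\<in>Q. lq p q \<and> lq q r \<longrightarrow> lq p r"
    and an: "\<forall>p\<in>Q. \<forall>q\<in>Q. lq p q \<and> lq q p \<longrightarrow> p = q"
    and MA: "MA_countable J"
    and dE: "\<forall>j\<in>J. E j \<subseteq> Q \<and> (\<forall>q\<in>Q. \<exists>r\<in>E j. lq r q)"
  shows "\<exists>G \<subseteq> Q. G \<noteq> {} \<and> (\<forall>p\<in>G. \<forall>q\<in>G. \<exists>r\<in>G. lq r p \<and> lq r q) \<and> (\<forall>j\<in>J. G \<inter> E j \<noteq> {})"
proof -
  define e where "e = to_nat_on Q"
  define d where "d = from_nat_into Q"
  have de: "\<And>q. q \<in> Q \<Longrightarrow> d (e q) = q" unfolding d_def e_def using cQ by simp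
  define P where "P = e ` Q"
  define le where "le a b = lq (d a) (d b)" for a b
  define \<D> where "\<D> j = e ` E j" for j
  have cp: "countable_poset P le"
    unfolding countable_poset_def
  proof (intro conjI ballI impI)
    show "P \<noteq> {}" using q0 unfolding P_def by blast
  next
    fix p assume "p \<in> P"
    then obtain x where "x \<in> Q" "p = e x" unfolding P_def by blast
    then show "le p p" using rf de unfolding le_def by simp
  next
    fix p q r assume "p \<in> P" "q \<in> P" "r \<in> P" and h: "le p q \<and> le q r"
    then obtain x y z where "x \<in> Q" "p = e x" "y \<in> Q" "q = e y" "z \<in> Q" "r = e z" unfolding P_def by blast
    then show "le p r" using tr h de unfolding le_def by metis
  next
    fix p q assume "p \<in> P" "q \<in> P" and h: "le p q \<and> le q p"
    then obtain x y where "x \<in> Q" "p = e x" "y \<in> Q" "q = e y" unfolding P_def by blast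
    then show "p = q" using an h de unfolding le_def by metis
  qed
  have dn: "\<forall>j\<in>J. dense_poset P le (\<D> j)"
  proof
    fix j assume j: "j \<in> J"
    show "dense_poset P le (\<D> j)"
      unfolding dense_poset_def
    proof
      show "\<D> j \<subseteq> P" using dE j unfolding \<D>_def P_def by blast
      show "\<forall>p\<in>P. \<exists>q\<in>\<D> j. le q p"
      proof
        fix p assume "p \<in> P"
        then obtain q where q: "q \<in> Q" "p = e q" unfolding P_def by blast
        then obtain r where r: "r \<in> E j" "lq r q" using dE j by blast
        have "r \<in> Q" using r dE j by blast
        then have "le (e r) p" using r q de unfolding le_def by simp
        moreover have "e r \<in> \<D> j" using r unfolding \<D>_def by blast
        ultimately show "\<exists>q\<in>\<D> j. le q p" by blast
      qed
    qed
  qed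
  have "\<exists>G. filter_poset P le G \<and> (\<forall>j\<in>J. G \<inter> \<D> j \<noteq> {})"
    using MA[unfolded MA_countable_def, rule_format, of P le \<D>] cp dn by blast
  then obtain Gn where Gn: "filter_poset P le Gn" "\<forall>j\<in>J. Gn \<inter> \<D> j \<noteq> {}" by blast
  define G where "G = d ` Gn"
  have GP: "Gn \<subseteq> P" using Gn unfolding filter_poset_def by blast
  have "G \<subseteq> Q" using GP de unfolding G_def P_def by auto
  moreover have "G \<noteq> {}" using Gn unfolding G_def filter_poset_def by blast
  moreover have "\<forall>p\<in>G. \<forall>q\<in>G. \<exists>r\<in>G. lq r p \<and> lq r q"
  proof (intro ballI)
    fix p q assume "p \<in> G" "q \<in> G"
    then obtain a b where "a \<in> Gn" "b \<in> Gn" "p = d a" "q = d b" unfolding G_def by blast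
    moreover then obtain c where "c \<in> Gn" "le c a" "le c b" using Gn unfolding filter_poset_def by blast
    ultimately show "\<exists>r\<in>G. lq r p \<and> lq r q" unfolding G_def le_def by blast
  qed
  moreover have "\<forall>j\<in>J. G \<inter> E j \<noteq> {}"
  proof
    fix j assume j: "j \<in> J"
    then obtain a where a: "a \<in> Gn" "a \<in> \<D> j" using Gn by blast
    then obtain r where r: "r \<in> E j" "a = e r" unfolding \<D>_def by blast
    then have "d a = r" using de dE j by blast
    then show "G \<inter> E j \<noteq> {}" using a r unfolding G_def by blast
  qed
  ultimately show ?thesis by blast
qed


lemma times_nat_eqpoll:
  assumes "infinite A" shows "A \<times> (UNIV::nat set) \<approx> A"
proof -
  have "ordLeq2 (card_of (UNIV::nat set)) (card_of A)" using assms infinite_iff_card_of_nat by blast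
  then have "ordIso2 (card_of (A \<times> (UNIV::nat set))) (card_of A)"
    using card_of_Times_infinite_simps(1)[of A "UNIV::nat set"] assms by blast
  then show ?thesis using eqpoll_iff_card_of_ordIso by blast
qed



lemma topspace_cantor: "topspace (cantor_space A) = (\<Pi>\<^sub>E i\<in>A. (UNIV::bool set))"
  unfolding cantor_space_def by simp

lemma basic_open:
  assumes "finite T"
  shows "openin (cantor_space A) {f \<in> topspace (cantor_space A). \<forall>x\<in>T. f x = c x}"
  unfolding cantor_space_def openin_product_topology_alt
proof (intro ballI)
  fix f assume f: "f \<in> {f \<in> topspace (product_topology (\<lambda>_. discrete_topology (UNIV::bool set)) A). \<forall>x\<in>T. f x = c x}"
  define U where "U i = (if i \<in> T then {c i} else (UNIV::bool set))" for i
  have "finite {i \<in> A. U i \<noteq> topspace (discrete_topology UNIV)}"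
    using assms by (rule finite_subset[rotated]) (auto simp: U_def)
  moreover have "f \<in> Pi\<^sub>E A U" using f by (auto simp: U_def PiE_iff)
  moreover have "Pi\<^sub>E A U \<subseteq> {f \<in> topspace (product_topology (\<lambda>_. discrete_topology (UNIV::bool set)) A). \<forall>x\<in>T. f x = c x}"
  proof
    fix g assume g: "g \<in> Pi\<^sub>E A U"
    then have "g \<in> topspace (product_topology (\<lambda>_. discrete_topology (UNIV::bool set)) A)"
      by (auto simp: PiE_iff)
    moreover have "\<forall>x\<in>T. g x = c x"
    proof
      fix x assume x: "x \<in> T"
      show "g x = c x"
      proof (cases "x \<in> A")
        case True then show ?thesis using g x by (auto simp: U_def PiE_iff)
      next
        case False
        have "f \<in> extensional A" "g \<in> extensional A" using f g by (auto simp: PiE_iff)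
        then have "g x = f x" using False by (metis extensional_arb)
        then show ?thesis using f x by auto
      qed
    qed
    ultimately show "g \<in> {f \<in> topspace (product_topology (\<lambda>_. discrete_topology (UNIV::bool set)) A). \<forall>x\<in>T. f x = c x}" by blast
  qed
  ultimately show "\<exists>U. finite {i \<in> A. U i \<noteq> topspace (discrete_topology UNIV)} \<and>
          (\<forall>i\<in>A. openin (discrete_topology UNIV) (U i)) \<and> f \<in> Pi\<^sub>E A U \<and>
          Pi\<^sub>E A U \<subseteq> {f \<in> topspace (product_topology (\<lambda>_. discrete_topology UNIV) A). \<forall>x\<in>T. f x = c x}"
    by auto
qed

lemma escape:
  assumes nd: "nowhere_dense_in (cantor_space A) F0" and T0: "finite T0" "T0 \<subseteq> A"
  shows "\<exists>T b. finite T \<and> T0 \<subseteq> T \<and> T \<subseteq> A \<and> (\<forall>x\<in>T0. b x = c x) \<and>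
     {f \<in> topspace (cantor_space A). \<forall>x\<in>T. f x = b x} \<inter> F0 = {}"
proof -
  let ?C = "cantor_space A"
  define U0 where "U0 = {f \<in> topspace ?C. \<forall>x\<in>T0. f x = c x}"
  have oU0: "openin ?C U0" unfolding U0_def by (rule basic_open[OF T0(1)])
  have "(\<lambda>x\<in>A. c x) \<in> U0" using T0 unfolding U0_def topspace_cantor by auto
  then have ne: "U0 \<noteq> {}" by blast
  have "\<not> U0 \<subseteq> ?C closure_of F0"
  proof
    assume "U0 \<subseteq> ?C closure_of F0"
    then have "U0 \<subseteq> ?C interior_of (?C closure_of F0)" using oU0 interior_of_maximal by blast
    then show False using nd ne unfolding nowhere_dense_in_def by blast
  qed
  then obtain f where f: "f \<in> U0" "f \<notin> ?C closure_of F0" by blast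
  have oW: "openin ?C (topspace ?C - ?C closure_of F0)"
    by (rule openin_diff[OF openin_topspace closedin_closure_of])
  have fW: "f \<in> topspace ?C - ?C closure_of F0" using f unfolding U0_def by blast
  obtain U where U: "finite {i \<in> A. U i \<noteq> topspace (discrete_topology (UNIV::bool set))}"
       "f \<in> Pi\<^sub>E A U" "Pi\<^sub>E A U \<subseteq> topspace ?C - ?C closure_of F0"
    using oW fW unfolding cantor_space_def openin_product_topology_alt by blast
  define T where "T = T0 \<union> {i \<in> A. U i \<noteq> UNIV}"
  have fT: "finite T" using U(1) T0 unfolding T_def by simp
  have "{g \<in> topspace ?C. \<forall>x\<in>T. g x = f x} \<subseteq> Pi\<^sub>E A U"
  proof
    fix g assume g: "g \<in> {g \<in> topspace ?C. \<forall>x\<in>T. g x = f x}"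
    show "g \<in> Pi\<^sub>E A U"
      unfolding PiE_iff
    proof (intro conjI ballI)
      fix i assume i: "i \<in> A"
      show "g i \<in> U i"
      proof (cases "U i = UNIV")
        case True then show ?thesis by simp
      next
        case False then have "i \<in> T" using i unfolding T_def by blast
        then show ?thesis using g U(2) i by (auto simp: PiE_iff)
      qed
    next
      show "g \<in> extensional A" using g unfolding topspace_cantor by (auto simp: PiE_iff)
    qed
  qed
  then have "{g \<in> topspace ?C. \<forall>x\<in>T. g x = f x} \<inter> F0 = {}"
    using U(3) closure_of_subset_Int[of ?C F0] by blast
  moreover have "\<forall>x\<in>T0. f x = c x" using f unfolding U0_def by blast
  moreover have "T0 \<subseteq> T" "T \<subseteq> A" using T0 unfolding T_def by auto
  ultimately show ?thesis using fT by (intro exI[of _ T] exI[of _ f]) auto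
qed



theorem mainTheorem6:
  fixes X :: "'a set" and I :: "'a set set" and \<tau> :: "'a topology"
    and D :: "nat \<Rightarrow> 'a set"
  assumes "countable X" and "infinite X"
    and "ideal_on X I" and "p_plus X I" and "hereditarily_meager X I"
    and "topspace \<tau> = X" and "I_crowded_topology I \<tau>"
    and "piw_less_mc \<tau>"
    and "\<And>i. D (Suc i) \<subseteq> D i"
    and "\<And>i. I_tau_crowded X I \<tau> (D i)"
    and "\<And>i. dense_in \<tau> (D i)"
  shows "\<exists>K :: nat \<Rightarrow> 'a set. (\<forall>i. finite (K i) \<and> K i \<subseteq> D i)
           \<and> dense_in \<tau> (\<Union>i. K i) \<and> I_tau_crowded X I \<tau> (\<Union>i. K i)"
proof -
  note H = assms(3)[unfolded ideal_on_def]
  have IX: "I \<subseteq> Pow X" using H[THEN conjunct1] .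
  have Idown: "\<And>A B. A \<in> I \<Longrightarrow> B \<subseteq> A \<Longrightarrow> B \<in> I"
    using H[THEN conjunct2, THEN conjunct1] by blast
  have Iun: "\<And>A B. A \<in> I \<Longrightarrow> B \<in> I \<Longrightarrow> A \<union> B \<in> I"
    using H[THEN conjunct2, THEN conjunct2, THEN conjunct1] by blast
  have Ifin: "\<And>F. finite F \<Longrightarrow> F \<subseteq> X \<Longrightarrow> F \<in> I"
    using H[THEN conjunct2, THEN conjunct2, THEN conjunct2, THEN conjunct2] by blast
  have XI: "X \<notin> I"
    using H[THEN conjunct2, THEN conjunct2, THEN conjunct2, THEN conjunct1] .
  have Iemp: "{} \<in> I" using Ifin by blast
  have Dmono: "\<And>i j. i \<le> j \<Longrightarrow> D j \<subseteq> D i"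
    by (rule lift_Suc_antimono_le[of D, OF assms(9)])
  obtain \<B> where pb: "pi_base \<tau> \<B>" and MAc: "\<forall>S :: nat set set. \<not> MA_countable S \<longrightarrow> \<B> \<prec> S"
    using assms(8) unfolding piw_less_mc_def by blast
  have Bopen: "\<And>B. B \<in> \<B> \<Longrightarrow> openin \<tau> B \<and> B \<noteq> {}" using pb unfolding pi_base_def by blast
  have Bsub: "\<And>U. openin \<tau> U \<Longrightarrow> U \<noteq> {} \<Longrightarrow> \<exists>B\<in>\<B>. B \<subseteq> U" using pb unfolding pi_base_def by blast
  have BX: "\<And>B. B \<in> \<B> \<Longrightarrow> B \<subseteq> X" using Bopen openin_subset assms(6) by blast
  have Bne: "\<B> \<noteq> {}"
  proof -
    have "X \<noteq> {}" using assms(2) by blast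
    then show ?thesis using Bsub[of X] openin_topspace[of \<tau>] assms(6) by auto
  qed
  have "\<forall>B\<in>\<B>. \<exists>A. A \<in> positive_sets X I \<and> A \<subseteq> B \<and> (\<forall>n. finite (A - D n))"
  proof
    fix B assume B: "B \<in> \<B>"
    define An where "An n = B \<inter> D n" for n
    have Apos: "An n \<in> positive_sets X I" for n
    proof -
      have "D n \<inter> B \<noteq> {}" using assms(11)[of n] Bopen[OF B]
        unfolding dense_in_def dense_intersects_open by blast
      moreover have "D n \<inter> B = {} \<or> D n \<inter> B \<in> positive_sets X I"
        using assms(10)[of n] Bopen[OF B] unfolding I_tau_crowded_def by blast
      ultimately show ?thesis by (simp add: An_def Int_commute)
    qed
    have "\<forall>n. An (Suc n) \<subseteq> An n" using assms(9) unfolding An_def by blast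
    then obtain A' where A': "A' \<in> positive_sets X I" "\<forall>n. finite (A' - An n)"
      using assms(4)[unfolded p_plus_def, rule_format, of An] Apos by blast
    define A where "A = A' \<inter> An 0"
    have "A' = A \<union> (A' - An 0)" unfolding A_def by blast
    moreover have "A' - An 0 \<in> I"
    proof -
      have "finite (A' - An 0)" using A'(2) by blast
      moreover have "A' - An 0 \<subseteq> X" using A'(1) unfolding positive_sets_def by blast
      ultimately show ?thesis by (rule Ifin)
    qed
    moreover have "A' \<notin> I" using A'(1) unfolding positive_sets_def by blast
    ultimately have "A \<notin> I" using Iun[of A "A' - An 0"] by auto
    then have "A \<in> positive_sets X I" using A'(1) unfolding positive_sets_def A_def by blast
    moreover have "A \<subseteq> B" unfolding A_def An_def by blast
    moreover have "finite (A - D n)" for n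
    proof -
      have "A - D n \<subseteq> A' - An n" unfolding A_def An_def by blast
      then show ?thesis using A'(2) finite_subset by blast
    qed
    ultimately show "\<exists>A. A \<in> positive_sets X I \<and> A \<subseteq> B \<and> (\<forall>n. finite (A - D n))" by blast
  qed
  then have AB1: "\<And>B. B \<in> \<B> \<Longrightarrow> \<exists>A. A \<in> positive_sets X I \<and> A \<subseteq> B \<and> (\<forall>n. finite (A - D n))" by blast
  define AB where "AB B = (SOME A. A \<in> positive_sets X I \<and> A \<subseteq> B \<and> (\<forall>n. finite (A - D n)))" for B
  have AB: "AB B \<in> positive_sets X I \<and> AB B \<subseteq> B \<and> (\<forall>n. finite (AB B - D n))" if "B \<in> \<B>" for B
    unfolding AB_def by (rule someI_ex[OF AB1[OF that]])
  have mg: "meager_in (cantor_space (AB B)) (char_point (AB B) ` (I \<inter> Pow (AB B)))" if B: "B \<in> \<B>" for B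
    using assms(5) AB[OF B] unfolding hereditarily_meager_def by blast
  define FF where "FF B = (SOME F :: nat \<Rightarrow> ('a \<Rightarrow> bool) set. (\<forall>n. nowhere_dense_in (cantor_space (AB B)) (F n))
        \<and> char_point (AB B) ` (I \<inter> Pow (AB B)) \<subseteq> (\<Union>n. F n))" for B
  have FF0: "(\<forall>n. nowhere_dense_in (cantor_space (AB B)) (FF B n))
        \<and> char_point (AB B) ` (I \<inter> Pow (AB B)) \<subseteq> (\<Union>n. FF B n)" if "B \<in> \<B>" for B
    unfolding FF_def by (rule someI_ex[OF mg[OF that, unfolded meager_in_def]])
  have FF: "\<And>B m. B \<in> \<B> \<Longrightarrow> nowhere_dense_in (cantor_space (AB B)) (FF B m)"
    "\<And>B. B \<in> \<B> \<Longrightarrow> char_point (AB B) ` (I \<inter> Pow (AB B)) \<subseteq> (\<Union>m. FF B m)"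
    using FF0 by simp_all
  have MAJ: "MA_countable (\<B> \<times> (UNIV::nat set))"
  proof (cases "finite \<B>")
    case True
    then have "countable (\<B> \<times> (UNIV::nat set))" by (intro countable_SIGMA) (auto intro: countable_finite)
    then show ?thesis by (rule MA_countable_set)
  next
    case False
    define g where "g b = to_nat_on X ` b" for b
    define S where "S = g ` \<B>"
    have injX: "inj_on (to_nat_on X) X" using assms(1) by (rule inj_on_to_nat_on)
    have inj: "inj_on g \<B>"
      unfolding inj_on_def g_def
    proof (intro ballI impI)
      fix b1 b2 assume "b1 \<in> \<B>" "b2 \<in> \<B>" "to_nat_on X ` b1 = to_nat_on X ` b2"
      then show "b1 = b2" using inj_on_image_eq_iff[OF injX] BX by blast
    qed
    have BS: "\<B> \<approx> S" unfolding eqpoll_def S_def using inj bij_betw_imageI by blast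
    have "MA_countable S"
    proof (rule ccontr)
      assume "\<not> MA_countable S" then have "\<B> \<prec> S" using MAc by blast
      then show False using BS unfolding lesspoll_def by blast
    qed
    moreover have "\<B> \<times> (UNIV::nat set) \<lesssim> S"
      using eqpoll_trans[OF times_nat_eqpoll[OF False] BS] by (rule eqpoll_imp_lepoll)
    ultimately show ?thesis using MA_lepoll by blast
  qed
  define N :: "nat \<times> (nat \<times> 'a) set \<times> 'a set \<Rightarrow> nat" where "N p = fst p" for p
  define Sg :: "nat \<times> (nat \<times> 'a) set \<times> 'a set \<Rightarrow> (nat \<times> 'a) set" where "Sg p = fst (snd p)" for p
  define Fb :: "nat \<times> (nat \<times> 'a) set \<times> 'a set \<Rightarrow> 'a set" where "Fb p = snd (snd p)" for p
  define Q where "Q = {p. finite (Sg p) \<and> finite (Fb p) \<and> Fb p \<subseteq> X \<and> Sg p \<subseteq> {..<N p} \<times> X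
      \<and> (\<forall>ix\<in>Sg p. snd ix \<in> D (fst ix))}"
  define lq where "lq p q \<longleftrightarrow> N q \<le> N p \<and> Sg p \<inter> ({..<N q} \<times> UNIV) = Sg q \<and> Fb q \<subseteq> Fb p
      \<and> (\<forall>ix\<in>Sg p - Sg q. snd ix \<notin> Fb q)" for p q
  have cQ: "countable Q"
  proof -
    have "Q \<subseteq> UNIV \<times> {S. finite S \<and> S \<subseteq> UNIV \<times> X} \<times> {F. finite F \<and> F \<subseteq> X}"
      unfolding Q_def N_def Sg_def Fb_def by auto
    moreover have "countable ((UNIV::nat set) \<times> {S. finite S \<and> S \<subseteq> (UNIV::nat set) \<times> X} \<times> {F. finite F \<and> F \<subseteq> X})"
    proof -
      have cN: "countable (UNIV::nat set)" by simp
      have "countable ((UNIV::nat set) \<times> X)" using cN assms(1) by (intro countable_SIGMA) auto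
      then have "countable {S. finite S \<and> S \<subseteq> (UNIV::nat set) \<times> X}" by (rule countable_Collect_finite_subset)
      moreover have "countable {F. finite F \<and> F \<subseteq> X}" using assms(1) by (rule countable_Collect_finite_subset)
      ultimately show ?thesis using cN by (intro countable_SIGMA) auto
    qed
    ultimately show ?thesis by (rule countable_subset)
  qed
  have q0: "(0, {}, {}) \<in> Q" unfolding Q_def N_def Sg_def Fb_def by simp
  have rf: "\<forall>p\<in>Q. lq p p" unfolding Q_def lq_def by auto
  have tr: "\<forall>p\<in>Q. \<forall>q\<in>Q. \<forall>r\<in>Q. lq p q \<and> lq q r \<longrightarrow> lq p r"
  proof (intro ballI impI)
    fix p q r assume "p \<in> Q" "q \<in> Q" "r \<in> Q" and h: "lq p q \<and> lq q r"
    have 1: "N r \<le> N p" using h unfolding lq_def by linarith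
    have 2: "Sg p \<inter> ({..<N r} \<times> UNIV) = Sg r"
    proof -
      have "Sg p \<inter> ({..<N r} \<times> UNIV) = (Sg p \<inter> ({..<N q} \<times> UNIV)) \<inter> ({..<N r} \<times> UNIV)"
        using h unfolding lq_def by auto
      also have "\<dots> = Sg r" using h unfolding lq_def by auto
      finally show ?thesis .
    qed
    have 3: "Fb r \<subseteq> Fb p" using h unfolding lq_def by blast
    have 4: "\<forall>ix\<in>Sg p - Sg r. snd ix \<notin> Fb r"
    proof
      fix ix assume ix: "ix \<in> Sg p - Sg r"
      show "snd ix \<notin> Fb r"
      proof (cases "ix \<in> Sg q")
        case True then show ?thesis using ix h unfolding lq_def by blast
      next
        case False then show ?thesis using ix h unfolding lq_def by blast
      qed
    qed
    show "lq p r" unfolding lq_def using 1 2 3 4 by blast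
  qed
  have an: "\<forall>p\<in>Q. \<forall>q\<in>Q. lq p q \<and> lq q p \<longrightarrow> p = q"
  proof (intro ballI impI)
    fix p q assume pq: "p \<in> Q" "q \<in> Q" and h: "lq p q \<and> lq q p"
    have "N p = N q" using h unfolding lq_def by simp
    moreover have "Sg p = Sg q"
    proof -
      have "Sg p = Sg p \<inter> ({..<N p} \<times> UNIV)" using pq unfolding Q_def by blast
      then show ?thesis using h \<open>N p = N q\<close> unfolding lq_def by simp
    qed
    moreover have "Fb p = Fb q" using h unfolding lq_def by blast
    ultimately show "p = q" unfolding N_def Sg_def Fb_def by (simp add: prod_eq_iff)
  qed
  define E where "E j = {q\<in>Q. snd j < N q \<and> (\<exists>T Tt. finite T \<and> Tt \<subseteq> T \<and> T \<subseteq> AB (fst j) \<and>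
      {f \<in> topspace (cantor_space (AB (fst j))). \<forall>x\<in>T. f x = (x \<in> Tt)} \<inter> FF (fst j) (snd j) = {} \<and>
      (\<forall>x\<in>Tt. x \<in> snd ` Sg q) \<and> (\<forall>x\<in>T - Tt. x \<notin> snd ` Sg q \<and> (x \<in> Fb q \<or> x \<notin> D (N q))))}" for j
  have dE: "\<forall>j\<in>\<B> \<times> (UNIV::nat set). E j \<subseteq> Q \<and> (\<forall>q\<in>Q. \<exists>r\<in>E j. lq r q)"
  proof
    fix j assume j: "j \<in> \<B> \<times> (UNIV::nat set)"
    obtain B m where jBm: "j = (B, m)" by (cases j)
    have B: "B \<in> \<B>" using j jBm by simp
    show "E j \<subseteq> Q \<and> (\<forall>q\<in>Q. \<exists>r\<in>E j. lq r q)"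
    proof
      show "E j \<subseteq> Q" unfolding E_def by blast
      show "\<forall>q\<in>Q. \<exists>r\<in>E j. lq r q"
      proof
        fix q assume q: "q \<in> Q"
        define n where "n = N q"
        define S where "S = Sg q"
        define F where "F = Fb q"
        define A where "A = AB B"
        define N0 where "N0 = max n (Suc m)"
        have qS: "finite S" "S \<subseteq> {..<n} \<times> X" "\<forall>ix\<in>S. snd ix \<in> D (fst ix)"
          and qF: "finite F" "F \<subseteq> X"
          using q unfolding Q_def S_def F_def n_def by auto
        have AX: "A \<subseteq> X" using AB[OF B] BX[OF B] unfolding A_def by blast
        define T0 where "T0 = A \<inter> (snd ` S \<union> F \<union> (A - D N0))"
        have fT0: "finite T0"
        proof -
          have "finite (A - D N0)" using AB[OF B] unfolding A_def by blast
          then show ?thesis unfolding T0_def using qS(1) qF(1) by blast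
        qed
        have T0A: "T0 \<subseteq> A" unfolding T0_def by blast
        obtain T b where Tb: "finite T" "T0 \<subseteq> T" "T \<subseteq> A" "\<forall>x\<in>T0. b x = (x \<in> snd ` S)"
          "{f \<in> topspace (cantor_space A). \<forall>x\<in>T. f x = b x} \<inter> FF B m = {}"
          using escape[OF FF(1)[OF B, of m, folded A_def] fT0 T0A, of "\<lambda>x. x \<in> snd ` S"] by blast
        define Tt where "Tt = {x\<in>T. b x}"
        have newpt: "x \<in> D N0 \<and> x \<notin> F" if "x \<in> Tt" "x \<notin> snd ` S" for x
        proof -
          have xA: "x \<in> A" "b x" using that Tb(3) unfolding Tt_def by auto
          show ?thesis
          proof (rule ccontr)
            assume "\<not> (x \<in> D N0 \<and> x \<notin> F)"
            then have "x \<in> T0" using xA unfolding T0_def by blast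
            then have "b x = (x \<in> snd ` S)" using Tb(4) by blast
            then show False using xA that by simp
          qed
        qed
        have oldT: "x \<in> Tt" if "x \<in> T" "x \<in> snd ` S" for x
        proof -
          have "x \<in> T0" using that Tb(3) unfolding T0_def by blast
          then show ?thesis using Tb(4) that unfolding Tt_def by blast
        qed
        define r where "r = (Suc N0, S \<union> {N0} \<times> (Tt - snd ` S), F \<union> (T - Tt))"
        have rN: "N r = Suc N0" and rS: "Sg r = S \<union> {N0} \<times> (Tt - snd ` S)" and rF: "Fb r = F \<union> (T - Tt)"
          unfolding r_def N_def Sg_def Fb_def by simp_all
        have nN0: "n \<le> N0" "m < Suc N0" unfolding N0_def by auto
        have TtT: "Tt \<subseteq> T" unfolding Tt_def by blast
        have fTt: "finite Tt" using Tb(1) TtT finite_subset by blast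
        have TX: "T \<subseteq> X" using Tb(3) AX by blast
        have "r \<in> Q"
          unfolding Q_def
        proof (intro CollectI conjI)
          show "finite (Sg r)" unfolding rS using qS(1) fTt by blast
          show "finite (Fb r)" unfolding rF using qF(1) Tb(1) by blast
          show "Fb r \<subseteq> X" unfolding rF using qF(2) TX by blast
          show "Sg r \<subseteq> {..<N r} \<times> X" unfolding rS rN using qS(2) nN0(1) TtT TX by auto
          show "\<forall>ix\<in>Sg r. snd ix \<in> D (fst ix)"
          proof
            fix ix assume "ix \<in> Sg r"
            then consider "ix \<in> S" | x where "ix = (N0, x)" "x \<in> Tt" "x \<notin> snd ` S" unfolding rS by blast
            then show "snd ix \<in> D (fst ix)"
            proof cases
              case 1 then show ?thesis using qS(3) by blast
            next
              case 2 then show ?thesis using newpt by simp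
            qed
          qed
        qed
        moreover have "lq r q"
          unfolding lq_def
        proof (intro conjI)
          show "N q \<le> N r" unfolding rN n_def[symmetric] using nN0 by simp
          show "Sg r \<inter> ({..<N q} \<times> UNIV) = Sg q"
            unfolding rS S_def[symmetric] n_def[symmetric] using qS(2) nN0(1) by auto
          show "Fb q \<subseteq> Fb r" unfolding rF F_def by blast
          show "\<forall>ix\<in>Sg r - Sg q. snd ix \<notin> Fb q"
            unfolding rS S_def[symmetric] F_def[symmetric] using newpt by auto
        qed
        moreover have "r \<in> E j"
        proof -
          have c1: "snd j < N r" using jBm rN nN0 by simp
          have eqset: "{f \<in> topspace (cantor_space A). \<forall>x\<in>T. f x = (x \<in> Tt)}
              = {f \<in> topspace (cantor_space A). \<forall>x\<in>T. f x = b x}" unfolding Tt_def by auto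
          have c2: "\<forall>x\<in>Tt. x \<in> snd ` Sg r"
          proof
            fix x assume x: "x \<in> Tt"
            show "x \<in> snd ` Sg r"
            proof (cases "x \<in> snd ` S")
              case True
              then obtain ix where "ix \<in> S" "x = snd ix" by blast
              then show ?thesis unfolding rS by blast
            next
              case False
              then have "(N0, x) \<in> Sg r" using x unfolding rS by blast
              then show ?thesis by (rule image_eqI[rotated]) simp
            qed
          qed
          have c3: "\<forall>x\<in>T - Tt. x \<notin> snd ` Sg r \<and> (x \<in> Fb r \<or> x \<notin> D (N r))"
          proof
            fix x assume x: "x \<in> T - Tt"
            then have "x \<notin> snd ` S" using oldT by blast
            then have "x \<notin> snd ` Sg r" using x unfolding rS by auto
            moreover have "x \<in> Fb r" using x unfolding rF by blast
            ultimately show "x \<notin> snd ` Sg r \<and> (x \<in> Fb r \<or> x \<notin> D (N r))" by blast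
          qed
          have c4: "{f \<in> topspace (cantor_space (AB (fst j))). \<forall>x\<in>T. f x = (x \<in> Tt)} \<inter> FF (fst j) (snd j) = {}"
            using eqset Tb(5) jBm unfolding A_def by simp
          have c5: "T \<subseteq> AB (fst j)" using Tb(3) jBm unfolding A_def by simp
          have "\<exists>T Tt. finite T \<and> Tt \<subseteq> T \<and> T \<subseteq> AB (fst j) \<and>
            {f \<in> topspace (cantor_space (AB (fst j))). \<forall>x\<in>T. f x = (x \<in> Tt)} \<inter> FF (fst j) (snd j) = {} \<and>
            (\<forall>x\<in>Tt. x \<in> snd ` Sg r) \<and> (\<forall>x\<in>T - Tt. x \<notin> snd ` Sg r \<and> (x \<in> Fb r \<or> x \<notin> D (N r)))"
            using Tb(1) TtT c5 c4 c2 c3 by blast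
          then show ?thesis unfolding E_def using \<open>r \<in> Q\<close> c1 by blast
        qed
        ultimately show "\<exists>r\<in>E j. lq r q" by blast
      qed
    qed
  qed
  obtain G where G: "G \<subseteq> Q" "G \<noteq> {}" "\<forall>p\<in>G. \<forall>q\<in>G. \<exists>r\<in>G. lq r p \<and> lq r q"
      "\<forall>j\<in>\<B> \<times> (UNIV::nat set). G \<inter> E j \<noteq> {}"
    using MA_poset[OF cQ q0 rf tr an MAJ dE] by blast
  have GQ: "\<And>p. p \<in> G \<Longrightarrow> p \<in> Q" using G(1) by blast
  have Gc: "\<And>p q. p \<in> G \<Longrightarrow> q \<in> G \<Longrightarrow> \<exists>r\<in>G. lq r p \<and> lq r q" using G(3) by blast
  have GE: "\<And>B m. B \<in> \<B> \<Longrightarrow> \<exists>q\<in>G. q \<in> E (B, m)" using G(4) by blast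
  have Qp: "\<And>p. p \<in> Q \<Longrightarrow> finite (Sg p) \<and> Sg p \<subseteq> {..<N p} \<times> X \<and> (\<forall>ix\<in>Sg p. snd ix \<in> D (fst ix))"
    unfolding Q_def by blast
  have lqS: "\<And>r p. lq r p \<Longrightarrow> Sg p \<subseteq> Sg r" unfolding lq_def by blast
  obtain B0 where B0: "B0 \<in> \<B>" using Bne by blast
  define K where "K i = {x. \<exists>q\<in>G. (i, x) \<in> Sg q}" for i
  have Kfin: "finite (K i) \<and> K i \<subseteq> D i" for i
  proof
    obtain q0 where q0: "q0 \<in> G" "q0 \<in> E (B0, i)" using GE[OF B0] by blast
    have iN: "i < N q0" using q0(2) unfolding E_def by simp
    have "K i \<subseteq> snd ` Sg q0"
    proof
      fix x assume "x \<in> K i"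
      then obtain q where q: "q \<in> G" "(i, x) \<in> Sg q" unfolding K_def by blast
      obtain r where r: "r \<in> G" "lq r q" "lq r q0" using Gc[OF q(1) q0(1)] by blast
      have "(i, x) \<in> Sg r" using lqS[OF r(2)] q(2) by blast
      then have "(i, x) \<in> Sg q0" using r(3) iN unfolding lq_def by blast
      then show "x \<in> snd ` Sg q0" by (rule image_eqI[rotated]) simp
    qed
    moreover have "finite (Sg q0)" using Qp[OF GQ[OF q0(1)]] by blast
    ultimately show "finite (K i)" using finite_subset by blast
  next
    show "K i \<subseteq> D i"
    proof
      fix x assume "x \<in> K i"
      then obtain q where q: "q \<in> G" "(i, x) \<in> Sg q" unfolding K_def by blast
      then show "x \<in> D i" using Qp[OF GQ[OF q(1)]] by fastforce
    qed
  qed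
  define UK where "UK = (\<Union>i. K i)"
  have UKiff: "x \<in> UK \<longleftrightarrow> (\<exists>q\<in>G. x \<in> snd ` Sg q)" for x
    unfolding UK_def K_def by force
  have UKX: "UK \<subseteq> X"
  proof
    fix x assume "x \<in> UK"
    then obtain q ix where "q \<in> G" "ix \<in> Sg q" "x = snd ix" using UKiff by blast
    then show "x \<in> X" using Qp[OF GQ] by fastforce
  qed
  have key: "UK \<inter> B \<notin> I" if B: "B \<in> \<B>" for B
  proof
    assume "UK \<inter> B \<in> I"
    define A where "A = AB B"
    have "UK \<inter> A \<in> I" using Idown[OF \<open>UK \<inter> B \<in> I\<close>] AB[OF B] unfolding A_def by blast
    then have "char_point A (UK \<inter> A) \<in> char_point A ` (I \<inter> Pow A)" by blast
    then obtain m where m: "char_point A (UK \<inter> A) \<in> FF B m" using FF(2)[OF B] unfolding A_def by blast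
    obtain q where q: "q \<in> G" "q \<in> E (B, m)" using GE[OF B] by blast
    then obtain T Tt where TT: "T \<subseteq> A"
      "{f \<in> topspace (cantor_space A). \<forall>x\<in>T. f x = (x \<in> Tt)} \<inter> FF B m = {}"
      "\<forall>x\<in>Tt. x \<in> snd ` Sg q" "\<forall>x\<in>T - Tt. x \<notin> snd ` Sg q \<and> (x \<in> Fb q \<or> x \<notin> D (N q))"
      unfolding E_def A_def by auto
    have "char_point A (UK \<inter> A) \<in> topspace (cantor_space A)"
      unfolding topspace_cantor char_point_def by simp
    moreover have "\<forall>x\<in>T. char_point A (UK \<inter> A) x = (x \<in> Tt)"
    proof
      fix x assume x: "x \<in> T"
      have cp: "char_point A (UK \<inter> A) x = (x \<in> UK)" using x TT(1) unfolding char_point_def by auto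
      show "char_point A (UK \<inter> A) x = (x \<in> Tt)"
      proof (cases "x \<in> Tt")
        case True then show ?thesis using cp TT(3) UKiff q(1) by blast
      next
        case False
        have "x \<notin> UK"
        proof
          assume "x \<in> UK"
          then obtain p ix where p: "p \<in> G" "ix \<in> Sg p" "x = snd ix" using UKiff by blast
          obtain r where r: "r \<in> G" "lq r p" "lq r q" using Gc[OF p(1) q(1)] by blast
          have ixr: "ix \<in> Sg r" using lqS[OF r(2)] p(2) by blast
          have xq: "x \<notin> snd ` Sg q" "x \<in> Fb q \<or> x \<notin> D (N q)" using TT(4) x False by blast+
          have ixq: "ix \<notin> Sg q" using xq(1) p(3) by blast
          then have "snd ix \<notin> Fb q" using ixr r(3) unfolding lq_def by blast
          moreover have "\<not> fst ix < N q"
          proof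
            assume "fst ix < N q"
            then have "ix \<in> Sg r \<inter> ({..<N q} \<times> UNIV)" using ixr by (cases ix) auto
            then show False using ixq r(3) unfolding lq_def by blast
          qed
          moreover have "snd ix \<in> D (fst ix)" using Qp[OF GQ[OF r(1)]] ixr by blast
          ultimately show False using xq(2) p(3) Dmono[of "N q" "fst ix"] by auto
        qed
        then show ?thesis using cp False by simp
      qed
    qed
    ultimately show False using TT(2) m by blast
  qed
  have dense: "dense_in \<tau> UK"
    unfolding dense_in_def dense_intersects_open
  proof (intro conjI allI impI)
    show "UK \<subseteq> topspace \<tau>" using UKX assms(6) by simp
  next
    fix U assume "openin \<tau> U \<and> U \<noteq> {}"
    then obtain B where "B \<in> \<B>" "B \<subseteq> U" using Bsub by blast
    then have "UK \<inter> B \<noteq> {}" using key Iemp by metis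
    then show "UK \<inter> U \<noteq> {}" using \<open>B \<subseteq> U\<close> by blast
  qed
  have crowd: "I_tau_crowded X I \<tau> UK"
    unfolding I_tau_crowded_def
  proof (intro allI impI)
    fix U assume U: "openin \<tau> U"
    show "UK \<inter> U = {} \<or> UK \<inter> U \<in> positive_sets X I"
    proof (cases "UK \<inter> U = {}")
      case False
      then have "U \<noteq> {}" by blast
      then obtain B where B: "B \<in> \<B>" "B \<subseteq> U" using Bsub U by blast
      have "UK \<inter> U \<notin> I"
      proof
        assume "UK \<inter> U \<in> I"
        then have "UK \<inter> B \<in> I" using Idown B(2) by blast
        then show False using key[OF B(1)] by blast
      qed
      then show ?thesis using UKX unfolding positive_sets_def by blast
    qed simp
  qed
  show ?thesis
    using Kfin dense crowd unfolding UK_def by blast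
qed

end
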